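(* Fix $0<\tau\le1$, $m>0$ and $\alpha=\frac{\tau}{2\tau+2m}$. There exist $S=S(\alpha)\ge2$ (depending also on $d$) and $\delta_0>0$ such that for every $\delta\in(0,\delta_0)$, with the integer $r$ determined by $2^{-r}\le\delta^S<2^{-r+1}$, the following holds: for every $\omega_1\in\Omega$ and every fixed cube $Q\in\mathcal{D}_1=\mathcal{D}(\omega_1)$, $$\mathbb{P}_{\omega_2}\{Q\text{ is bad}\}\le\delta^2,$$ and symmetrically $\mathbb{P}_{\omega_1}\{R\text{ is bad}\}\le\delta^2$ for every fixed $R\in\mathcal{D}_2=\mathcal{D}(\omega_2)$.
   Context: Fix a unit cube $Q_*\subset\mathbb{R}^d$. $\Omega=(-1/40,1/40]^d$ with normalized Lebesgue measure $\mathbb{P}$. For $\omega\in\Omega$, $\mathcal{D}(\omega)$ is the collection of all dyadic subcubes of $\omega+Q_*$ (obtained by repeated subdivision into $2^d$ children). $\omega_1,\omega_2\in\Omega$ are independent. The skeleton of a cube $R$ is $sk\,R=\bigcup_{i=1}^{2^d}\partial R_i$, $R_i$ the dyadic children of $R$; $\ell(\cdot)$ is side length. A cube $Q\in\mathcal{D}_1$ is bad if there is $R\in\mathcal{D}_2$ with $\ell(R)\ge2^r\ell(Q)$ and $\operatorname{dist}(Q,sk\,R)<\ell(Q)^\alpha\ell(R)^{1-\alpha}$; badness of $R\in\mathcal{D}_2$ is defined symmetrically with respect to $\mathcal{D}_1$. *)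

theory Defs
  imports "HOL-Analysis.Analysis"
begin

definition cube :: "real^'n \<Rightarrow> real \<Rightarrow> (real^'n) set" where
  "cube a s = {x. \<forall>i. a$i \<le> x$i \<and> x$i \<le> a$i + s}"

definition children :: "real^'n \<Rightarrow> real \<Rightarrow> ((real^'n) \<times> real) set" where
  "children a s = {(a + (\<chi> i. (s/2) * real (e i)), s/2) | e. \<forall>i. e i \<in> {0::nat, 1}}"

definition skel :: "real^'n \<Rightarrow> real \<Rightarrow> (real^'n) set" where
  "skel a s = (\<Union>(b,t)\<in>children a s. frontier (cube b t))"

text \<open>The dyadic system of the shifted cube \<omega> + Q_*, where Q_* = cube c 1,
  represented by (corner, side length) pairs.\<close>
definition dyadic :: "real^'n \<Rightarrow> real^'n \<Rightarrow> ((real^'n) \<times> real) set" where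
  "dyadic c \<omega> = {(c + \<omega> + (\<chi> i. real (j i) / 2^k), 1 / 2^k) | k j.
      \<forall>i. j i < (2::nat)^k}"

definition Omega :: "(real^'n) set" where
  "Omega = {\<omega>. \<forall>i. -1/40 < \<omega>$i \<and> \<omega>$i \<le> 1/40}"

definition bad :: "int \<Rightarrow> real \<Rightarrow> ((real^'n) \<times> real) set \<Rightarrow> real^'n \<Rightarrow> real \<Rightarrow> bool" where
  "bad r \<alpha> D a s \<longleftrightarrow> (\<exists>(b,t)\<in>D. t \<ge> 2 powr (real_of_int r) * s \<and>
      setdist (cube a s) (skel b t) < s powr \<alpha> * t powr (1 - \<alpha>))"

end

theory Submission
  imports Defs
begin


lemma cube_cbox: "cube a s = cbox a (\<chi> i. a$i + s)"
  by (auto simp: cube_def mem_box_cart)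

lemma skel_alt: "skel b t = (\<Union>e\<in>{e. \<forall>i. e i \<in> {0::nat,1}}. frontier (cube (b + (\<chi> i. (t/2) * real (e i))) (t/2)))"
  unfolding skel_def children_def by auto

lemma skel_coord:
  fixes b y :: "real^'n"
  assumes "y \<in> skel b t"
  shows "\<exists>i. \<exists>m::nat. m \<le> 2 \<and> y$i = b$i + real m * (t/2)"
proof -
  from assms obtain e where e: "\<forall>i. e i \<in> {0::nat,1}"
    and y: "y \<in> frontier (cube (b + (\<chi> i. (t/2) * real (e i))) (t/2))"
    unfolding skel_alt by auto
  let ?a = "b + (\<chi> i. (t/2) * real (e i))"
  from y have y2: "y \<in> cbox ?a (\<chi> i. ?a$i + t/2) - box ?a (\<chi> i. ?a$i + t/2)"
    by (simp add: cube_cbox frontier_cbox)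
  then have A: "\<forall>i. ?a$i \<le> y$i \<and> y$i \<le> ?a$i + t/2" by (simp add: mem_box_cart)
  from y2 obtain i where "\<not> (?a$i < y$i \<and> y$i < ?a$i + t/2)" 
    by (simp add: mem_box_cart) blast
  moreover from A have "?a$i \<le> y$i" "y$i \<le> ?a$i + t/2" by auto
  ultimately have "y$i = ?a$i \<or> y$i = ?a$i + t/2" by linarith
  then show ?thesis
  proof
    assume "y$i = ?a$i"
    moreover from e have "e i = 0 \<or> e i = 1" by simp
    then have "e i \<le> 1" by linarith
    ultimately show ?thesis by (intro exI[of _ i] exI[of _ "e i"]) (auto simp: algebra_simps)
  next
    assume "y$i = ?a$i + t/2"
    moreover from e have "e i = 0 \<or> e i = 1" by simp
    then have "e i \<le> 1" by linarith
    ultimately show ?thesis by (intro exI[of _ i] exI[of _ "e i + 1"]) (auto simp: algebra_simps)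
  qed
qed

lemma cube_translate: "cube (b + w) t = (+) w ` cube b t"
proof -
  have "x \<in> cube (b + w) t \<longleftrightarrow> x - w \<in> cube b t" for x
    by (auto simp: cube_def algebra_simps)
  note * = this
  show ?thesis
  proof (intro set_eqI iffI)
    fix x assume "x \<in> cube (b + w) t"
    then have "x - w \<in> cube b t" using * by simp
    moreover have "x = w + (x - w)" by simp
    ultimately show "x \<in> (+) w ` cube b t" by (intro image_eqI)
  next
    fix x assume "x \<in> (+) w ` cube b t"
    then obtain y where "y \<in> cube b t" "x = w + y" by auto
    then show "x \<in> cube (b + w) t" using *[of x] by simp
  qed
qed

lemma skel_translate: "skel (b + w) t = (+) w ` skel b t"
proof -
  have "cube (b + w + v) s = (+) w ` cube (b + v) s" for v s
  proof -
    have e: "b + w + v = (b + v) + w" by (simp add: algebra_simps)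
    show ?thesis unfolding e by (rule cube_translate)
  qed
  then show ?thesis unfolding skel_alt
    by (auto simp: frontier_translation)
qed

lemma Omega_sets: "(Omega :: (real^'n) set) \<in> sets lebesgue"
proof -
  have eq: "Omega = (\<Inter>i. {x::real^'n. -1/40 < x$i} \<inter> {x. x$i \<le> 1/40})"
    by (auto simp: Omega_def)
  have A: "{x::real^'n. -1/40 < x$i} \<in> sets lebesgue" for i :: 'n
    unfolding sets_lborel[symmetric] by (intro sets_completionI_sets) (simp add: borel_open open_Collect_less continuous_intros)
  have B: "{x::real^'n. x$i \<le> 1/40} \<in> sets lebesgue" for i :: 'n
    unfolding sets_lborel[symmetric] by (intro sets_completionI_sets) (simp add: borel_closed closed_Collect_le continuous_intros)
  show ?thesis unfolding eq
    by (intro sets.finite_INT) (auto intro: sets.Int A B)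
qed

lemma b_in_skel:
  fixes b :: "real^'n"
  assumes "t > 0"
  shows "b \<in> skel b t"
proof -
  have "b \<in> frontier (cube (b + (\<chi> i. (t/2) * real ((\<lambda>_. 0::nat) i))) (t/2))"
    using assms by (simp add: cube_cbox frontier_cbox mem_box_cart)
  moreover have e: "(\<lambda>_. 0::nat) \<in> {e. \<forall>i. e i \<in> {0::nat,1}}" by simp
  ultimately show ?thesis unfolding skel_alt by (intro UN_I[OF e])
qed

lemma bad_cover:
  fixes a c \<omega> :: "real^'n"
  assumes s: "s > 0" and bad: "bad r \<alpha> (dyadic c \<omega>) a s"
  shows "\<exists>k::nat. 2 powr r * s \<le> 1/2^k \<and> (\<exists>i. \<exists>n::nat. n \<le> 2^(k+1) \<and>
     a$i - c$i - real n/2^(k+1) - s powr \<alpha> * (1/2^k) powr (1-\<alpha>) < \<omega>$i \<and>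
     \<omega>$i < a$i + s - c$i - real n/2^(k+1) + s powr \<alpha> * (1/2^k) powr (1-\<alpha>))"
proof -
  from bad obtain k j where j: "\<forall>i. j i < (2::nat)^k" and tb: "2 powr r * s \<le> 1/2^k"
    and sd: "setdist (cube a s) (skel (c + \<omega> + (\<chi> i. real (j i) / 2^k)) (1/2^k))
              < s powr \<alpha> * (1/2^k) powr (1-\<alpha>)"
    unfolding bad_def dyadic_def by auto
  define b where "b = c + \<omega> + (\<chi> i. real (j i) / 2^k)"
  define t :: real where "t = 1/2^k"
  define \<epsilon> where "\<epsilon> = s powr \<alpha> * (1/2^k) powr (1-\<alpha>)"
  have "a \<in> cube a s" using s by (auto simp: cube_def)
  moreover have "b \<in> skel b t" by (rule b_in_skel) (simp add: t_def)
  ultimately have ne: "cube a s \<noteq> {}" "skel b t \<noteq> {}" by blast+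
  have sd': "setdist (cube a s) (skel b t) < \<epsilon>" using sd unfolding b_def t_def \<epsilon>_def .
  obtain x y where x: "x \<in> cube a s" and y: "y \<in> skel b t" and xy: "dist x y < \<epsilon>"
    by (rule setdist_ltE[OF sd' ne])
  from skel_coord[OF y] obtain i m where m: "m \<le> 2" "y$i = b$i + real m * (t/2)" by blast
  have "\<bar>x$i - y$i\<bar> \<le> dist x y"
    unfolding dist_norm using component_le_norm_cart[of "x - y" i] by simp
  with xy have xyi: "\<bar>x$i - y$i\<bar> < \<epsilon>" by simp
  from x have xi: "a$i \<le> x$i" "x$i \<le> a$i + s" by (auto simp: cube_def)
  define n where "n = 2 * j i + m"
  have "j i + 1 \<le> 2^k" using j by (simp add: Suc_le_eq)
  then have "n \<le> 2^(k+1)" unfolding n_def using m(1) by simp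
  moreover have "real n / 2^(k+1) = real (j i) / 2^k + real m * (t/2)"
    unfolding n_def t_def by (simp add: field_simps)
  then have "y$i = c$i + \<omega>$i + real n / 2^(k+1)"
    using m(2) unfolding b_def by simp
  ultimately have "n \<le> 2^(k+1) \<and>
     a$i - c$i - real n/2^(k+1) - \<epsilon> < \<omega>$i \<and>
     \<omega>$i < a$i + s - c$i - real n/2^(k+1) + \<epsilon>" using xyi xi 
    by (simp add: abs_less_iff)
  then have H: "n \<le> 2^(k+1) \<and>
     a$i - c$i - real n/2^(k+1) - s powr \<alpha> * (1/2^k) powr (1-\<alpha>) < \<omega>$i \<and>
     \<omega>$i < a$i + s - c$i - real n/2^(k+1) + s powr \<alpha> * (1/2^k) powr (1-\<alpha>)"
    unfolding \<epsilon>_def .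
  show ?thesis
    by (rule exI[of _ k], rule conjI[OF tb], rule exI[of _ i], rule exI[of _ n], rule H)
qed

lemma open_setdist_translate:
  fixes A B :: "'a::real_normed_vector set"
  assumes "A \<noteq> {}" "B \<noteq> {}"
  shows "open {w. setdist A ((+) w ` B) < e}"
proof -
  have "{w. setdist A ((+) w ` B) < e} = (\<Union>x\<in>A. \<Union>y\<in>B. ball (x - y) e)"
  proof (intro set_eqI iffI)
    fix w assume "w \<in> {w. setdist A ((+) w ` B) < e}"
    then have sd: "setdist A ((+) w ` B) < e" by simp
    have ne: "(+) w ` B \<noteq> {}" using assms(2) by simp
    obtain x z where "x \<in> A" "z \<in> (+) w ` B" "dist x z < e"
      by (rule setdist_ltE[OF sd assms(1) ne])
    then obtain y where "y \<in> B" "z = w + y" by auto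
    moreover have "dist (x - y) w = dist x (w + y)"
      by (simp add: dist_norm algebra_simps)
    ultimately have "w \<in> ball (x - y) e" using \<open>dist x z < e\<close> by simp
    then show "w \<in> (\<Union>x\<in>A. \<Union>y\<in>B. ball (x - y) e)"
      using \<open>x \<in> A\<close> \<open>y \<in> B\<close> by blast
  next
    fix w assume "w \<in> (\<Union>x\<in>A. \<Union>y\<in>B. ball (x - y) e)"
    then obtain x y where xy: "x \<in> A" "y \<in> B" "dist (x - y) w < e" by auto
    have "dist (x - y) w = dist x (w + y)"
      by (simp add: dist_norm algebra_simps)
    moreover have "setdist A ((+) w ` B) \<le> dist x (w + y)"
      using xy by (intro setdist_le_dist) auto
    ultimately show "w \<in> {w. setdist A ((+) w ` B) < e}" using xy by simp
  qed
  moreover have "open (\<Union>x\<in>A. \<Union>y\<in>B. ball (x - y) e)"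
    by (intro open_UN ballI open_ball)
  ultimately show ?thesis by simp
qed

lemma bad_open:
  fixes a c :: "real^'n"
  assumes s: "s > 0"
  shows "open {\<omega>. bad r \<alpha> (dyadic c \<omega>) a s}"
proof -
  define P where "P = {(k::nat, j::'n \<Rightarrow> nat). (\<forall>i. j i < (2::nat)^k) \<and> 2 powr r * s \<le> 1/2^k}"
  define v where "v = (\<lambda>(k::nat) (j::'n \<Rightarrow> nat). (\<chi> i. real (j i) / 2^k) :: real^'n)"
  define F where "F = (\<lambda>(k::nat) (j::'n \<Rightarrow> nat). {\<omega>. setdist (cube a s) ((+) \<omega> ` skel (c + v k j) (1/2^k)) < s powr \<alpha> * (1/2^k) powr (1-\<alpha>)})"
  have eq: "{\<omega>. bad r \<alpha> (dyadic c \<omega>) a s} = (\<Union>kj\<in>P. F (fst kj) (snd kj))"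
  proof -
    have sk: "skel (c + \<omega> + v k j) t = (+) \<omega> ` skel (c + v k j) t" for \<omega> k j t
    proof -
      have e: "c + \<omega> + v k j = (c + v k j) + \<omega>" by (simp add: algebra_simps)
      show ?thesis unfolding e by (rule skel_translate)
    qed
    show ?thesis
    proof (intro set_eqI iffI)
      fix \<omega> assume "\<omega> \<in> {\<omega>. bad r \<alpha> (dyadic c \<omega>) a s}"
      then obtain k j where j: "\<forall>i. j i < (2::nat)^k" and tb: "2 powr r * s \<le> 1/2^k"
        and sd: "setdist (cube a s) (skel (c + \<omega> + (\<chi> i. real (j i) / 2^k)) (1/2^k))
              < s powr \<alpha> * (1/2^k) powr (1-\<alpha>)"
        unfolding bad_def dyadic_def by auto
      have kP: "(k,j) \<in> P" using j tb unfolding P_def by simp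
      have e2: "(\<chi> i. real (j i) / 2^k) = v k j" by (simp add: v_def)
      have "setdist (cube a s) ((+) \<omega> ` skel (c + v k j) (1/2^k)) < s powr \<alpha> * (1/2^k) powr (1-\<alpha>)"
        using sd unfolding e2 sk .
      then have X: "\<omega> \<in> F (fst (k,j)) (snd (k,j))" unfolding F_def by simp
      show "\<omega> \<in> (\<Union>kj\<in>P. F (fst kj) (snd kj))" using kP X by (rule UN_I)
    next
      fix \<omega> assume "\<omega> \<in> (\<Union>kj\<in>P. F (fst kj) (snd kj))"
      then obtain kj where kjP: "kj \<in> P" and kjm: "\<omega> \<in> F (fst kj) (snd kj)"
        by (rule UN_E)
      define k where "k = fst kj"
      define j where "j = snd kj"
      have kP: "(\<forall>i. j i < (2::nat)^k) \<and> 2 powr r * s \<le> 1/2^k"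
        using kjP unfolding P_def k_def j_def by (cases kj) simp
      have sd: "setdist (cube a s) ((+) \<omega> ` skel (c + v k j) (1/2^k)) < s powr \<alpha> * (1/2^k) powr (1-\<alpha>)"
        using kjm unfolding F_def k_def j_def by simp
      have mem: "(c + \<omega> + v k j, 1/2^k) \<in> dyadic c \<omega>"
        unfolding dyadic_def v_def using kP by blast
      have "setdist (cube a s) (skel (c + \<omega> + v k j) (1/2^k)) < s powr \<alpha> * (1/2^k) powr (1-\<alpha>)"
        using sd unfolding sk .
      then have "bad r \<alpha> (dyadic c \<omega>) a s"
        unfolding bad_def using mem kP by blast
      then show "\<omega> \<in> {\<omega>. bad r \<alpha> (dyadic c \<omega>) a s}" by simp
    qed
  qed
  have ne: "skel b t \<noteq> {}" if "t > 0" for b :: "real^'n" and t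
    using b_in_skel[OF that] by blast
  have "a \<in> cube a s" using s by (auto simp: cube_def)
  then have A: "cube a s \<noteq> {}" by blast
  have oF: "open (F k j)" for k j
  proof -
    have ne1: "skel (c + v k j) (1/2^k) \<noteq> {}" by (rule ne) simp
    show ?thesis unfolding F_def using open_setdist_translate[OF A ne1] by simp
  qed
  show ?thesis unfolding eq by (rule open_UN, rule ballI, rule oF)
qed

lemma measure_cbox_cart:
  fixes a b :: "real^'n"
  assumes "\<And>i. a$i \<le> b$i"
  shows "measure lebesgue (cbox a b) = (\<Prod>i\<in>UNIV. b$i - a$i)"
proof -
  have "cbox a b \<noteq> {}" using assms by (auto simp: interval_eq_empty_cart not_less)
  then show ?thesis
    by (metis cbox_borel content_cbox_cart measure_completion sets_lborel)
qed

lemma Omega_sub: "(Omega :: (real^'n) set) \<subseteq> cbox (\<chi> _. -1/40) (\<chi> _. 1/40)"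
proof
  fix x :: "real^'n" assume "x \<in> Omega"
  then have h: "-1/40 < x$i \<and> x$i \<le> 1/40" for i by (simp add: Omega_def)
  have "-1/40 \<le> x$i \<and> x$i \<le> 1/40" for i using h[of i] by linarith
  then show "x \<in> cbox (\<chi> _. -1/40) (\<chi> _. 1/40)" by (simp add: mem_box_cart)
qed

lemma Omega_lmeas: "(Omega :: (real^'n) set) \<in> lmeasurable"
  by (rule fmeasurableI2[OF lmeasurable_cbox Omega_sub Omega_sets])

lemma Omega_measure: "(1/40)^CARD('n) \<le> measure lebesgue (Omega :: (real^'n) set)"
proof -
  have sub: "cbox (0::real^'n) (\<chi> _. 1/40) \<subseteq> Omega"
  proof
    fix x :: "real^'n" assume "x \<in> cbox 0 (\<chi> _. 1/40)"
    then have h: "0 \<le> x$i \<and> x$i \<le> 1/40" for i by (simp add: mem_box_cart)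
    have "-1/40 < x$i \<and> x$i \<le> 1/40" for i using h[of i] by linarith
    then show "x \<in> Omega" by (simp add: Omega_def)
  qed
  have "measure lebesgue (cbox (0::real^'n) (\<chi> _. 1/40)) = (\<Prod>i\<in>(UNIV::'n set). 1/40)"
    by (subst measure_cbox_cart) auto
  also have "\<dots> = (1/40)^CARD('n)" by simp
  finally have "measure lebesgue (cbox (0::real^'n) (\<chi> _. 1/40)) = (1/40)^CARD('n)" .
  moreover have "measure lebesgue (cbox (0::real^'n) (\<chi> _. 1/40)) \<le> measure lebesgue (Omega :: (real^'n) set)"
    by (rule measure_mono_fmeasurable[OF sub]) (auto intro: Omega_lmeas)
  ultimately show ?thesis by simp
qed

lemma strip_sets: "(Omega \<inter> {\<omega>::real^'n. lo < \<omega>$i \<and> \<omega>$i < hi}) \<in> sets lebesgue"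
proof -
  have "open {\<omega>::real^'n. lo < \<omega>$i \<and> \<omega>$i < hi}"
    by (intro open_Collect_conj open_Collect_less continuous_intros)
  then have "{\<omega>::real^'n. lo < \<omega>$i \<and> \<omega>$i < hi} \<in> sets lebesgue"
    unfolding sets_lborel[symmetric] by (intro sets_completionI_sets) (simp add: borel_open)
  then show ?thesis using Omega_sets by (rule sets.Int[rotated])
qed

lemma strip_measure:
  fixes i :: "'n::finite"
  assumes "lo \<le> hi"
  shows "measure lebesgue (Omega \<inter> {\<omega>::real^'n. lo < \<omega>$i \<and> \<omega>$i < hi}) \<le> (hi - lo) * (1/20)^(CARD('n) - 1)"
proof -
  define L :: "real^'n" where "L = (\<chi> j. if j = i then lo else -1/40)"
  define U :: "real^'n" where "U = (\<chi> j. if j = i then hi else 1/40)"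
  have sub: "Omega \<inter> {\<omega>::real^'n. lo < \<omega>$i \<and> \<omega>$i < hi} \<subseteq> cbox L U"
  proof
    fix x :: "real^'n" assume x: "x \<in> Omega \<inter> {\<omega>::real^'n. lo < \<omega>$i \<and> \<omega>$i < hi}"
    then have h: "-1/40 < x$j \<and> x$j \<le> 1/40" for j by (simp add: Omega_def)
    have "L$j \<le> x$j \<and> x$j \<le> U$j" for j
    proof (cases "j = i")
      case True then show ?thesis using x by (simp add: L_def U_def)
    next
      case False then show ?thesis using h[of j] by (simp add: L_def U_def)
    qed
    then show "x \<in> cbox L U" by (simp add: mem_box_cart)
  qed
  have "measure lebesgue (Omega \<inter> {\<omega>::real^'n. lo < \<omega>$i \<and> \<omega>$i < hi}) \<le> measure lebesgue (cbox L U)"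
    by (rule measure_mono_fmeasurable[OF sub strip_sets lmeasurable_cbox])
  also have "measure lebesgue (cbox L U) = (\<Prod>j\<in>UNIV. U$j - L$j)"
    using assms by (intro measure_cbox_cart) (simp add: L_def U_def)
  also have "\<dots> = (U$i - L$i) * (\<Prod>j\<in>UNIV - {i}. U$j - L$j)"
    by (rule prod.remove) auto
  also have "(\<Prod>j\<in>UNIV - {i}. U$j - L$j) = (\<Prod>j\<in>UNIV - {i}. 1/20)"
    by (rule prod.cong) (auto simp: L_def U_def)
  also have "\<dots> = (1/20)^(CARD('n) - 1)"
    by (simp add: card_Diff_singleton)
  finally show ?thesis by (simp add: L_def U_def)
qed

lemma geom_sum_powr:
  fixes s \<alpha> :: real
  assumes s: "s > 0" and a: "\<alpha> > 0"
  shows "(\<Sum>k\<le>N. (s * 2^k) powr \<alpha>) \<le> (s * 2^N) powr \<alpha> / (1 - 2 powr (-\<alpha>))"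
proof (induction N)
  case 0
  have q: "0 < 1 - 2 powr (-\<alpha>)" "1 - 2 powr (-\<alpha>) \<le> 1"
    using a by (auto simp: powr_minus_divide)
  have "0 \<le> s powr \<alpha>" by simp
  then have "s powr \<alpha> * (1 - 2 powr (-\<alpha>)) \<le> s powr \<alpha>" by (rule mult_left_le[OF q(2)])
  then show ?case using q by (simp add: le_divide_eq)
next
  case (Suc N)
  define q where "q = 2 powr (-\<alpha>)"
  have q: "0 < 1 - q" "0 < q" using a unfolding q_def by (auto simp: powr_minus_divide)
  have X: "(s * 2^N) powr \<alpha> = q * (s * 2^Suc N) powr \<alpha>"
  proof -
    have "s * 2^Suc N = (s * 2^N) * 2" by simp
    then have "(s * 2^Suc N) powr \<alpha> = (s * 2^N) powr \<alpha> * 2 powr \<alpha>"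
      using s by (simp add: powr_mult)
    moreover have "q * 2 powr \<alpha> = 1" unfolding q_def by (simp add: powr_minus)
    ultimately show ?thesis by (metis mult.assoc mult.commute mult_1)
  qed
  have "(\<Sum>k\<le>Suc N. (s * 2^k) powr \<alpha>) = (\<Sum>k\<le>N. (s * 2^k) powr \<alpha>) + (s * 2^Suc N) powr \<alpha>"
    by simp
  also have "\<dots> \<le> (s * 2^N) powr \<alpha> / (1 - q) + (s * 2^Suc N) powr \<alpha>"
    using Suc.IH unfolding q_def by simp
  also have "\<dots> = (s * 2^Suc N) powr \<alpha> / (1 - q)"
    unfolding X using q by (simp add: field_simps)
  finally show ?case unfolding q_def .
qed

lemma K_cond:
  fixes s :: real
  shows "2 powr r * s \<le> 1/2^k \<longleftrightarrow> s * 2^k \<le> 2 powr (-r)"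
proof -
  have p: "0 < 2 powr r" "(0::real) < 2^k" by auto
  have "2 powr r * s \<le> 1/2^k \<longleftrightarrow> (2 powr r * s) * 2^k \<le> 1"
    using p by (simp add: le_divide_eq)
  also have "\<dots> \<longleftrightarrow> s * 2^k \<le> 1 / 2 powr r"
    using p by (simp add: le_divide_eq algebra_simps)
  also have "1 / 2 powr r = 2 powr (-r)" by (simp add: powr_minus_divide)
  finally show ?thesis .
qed

lemma geom_K:
  fixes s \<alpha> :: real
  assumes s: "s > 0" and a: "\<alpha> > 0"
  shows "finite {k::nat. 2 powr r * s \<le> 1/2^k}"
    and "(\<Sum>k\<in>{k::nat. 2 powr r * s \<le> 1/2^k}. (s*2^k) powr \<alpha>) \<le> (2 powr (-r)) powr \<alpha> / (1 - 2 powr (-\<alpha>))"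
proof -
  define R where "R = 2 powr (-r)"
  define K where "K = {k::nat. 2 powr r * s \<le> 1/2^k}"
  have K: "K = {k. s * 2^k \<le> R}" unfolding K_def R_def K_cond ..
  obtain M where M: "R / s < 2^M" using real_arch_pow[of 2 "R/s"] by auto
  have KM: "K \<subseteq> {..<M}"
  proof
    fix k assume "k \<in> K"
    then have "s * 2^k \<le> R" unfolding K by simp
    then have "(2::real)^k \<le> R / s" using s by (simp add: le_divide_eq mult.commute)
    with M have "(2::real)^k < 2^M" by linarith
    then show "k \<in> {..<M}" by simp
  qed
  then show fin: "finite {k::nat. 2 powr r * s \<le> 1/2^k}" unfolding K_def[symmetric]
    using finite_subset by blast
  have q: "0 < 1 - 2 powr (-\<alpha>)" using a by (auto simp: powr_minus_divide)
  have main: "(\<Sum>k\<in>K. (s*2^k) powr \<alpha>) \<le> R powr \<alpha> / (1 - 2 powr (-\<alpha>))"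
  proof (cases "K = {}")
    case True
    then show ?thesis using q by simp
  next
    case False
    define N where "N = Max K"
    have finK: "finite K" using fin unfolding K_def .
    have NK: "N \<in> K" unfolding N_def using finK False by (rule Max_in)
    have KN: "K = {..N}"
    proof (intro set_eqI iffI)
      fix k assume "k \<in> K" then show "k \<in> {..N}" unfolding N_def using finK by simp
    next
      fix k assume "k \<in> {..N}"
      then have "(2::real)^k \<le> 2^N" by simp
      then have "s * 2^k \<le> s * 2^N" using s by simp
      also have "\<dots> \<le> R" using NK unfolding K by simp
      finally show "k \<in> K" unfolding K by simp
    qed
    have "(\<Sum>k\<in>K. (s*2^k) powr \<alpha>) \<le> (s * 2^N) powr \<alpha> / (1 - 2 powr (-\<alpha>))"
      unfolding KN using geom_sum_powr[OF s a] .
    also have "\<dots> \<le> R powr \<alpha> / (1 - 2 powr (-\<alpha>))"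
    proof (rule divide_right_mono)
      show "(s * 2^N) powr \<alpha> \<le> R powr \<alpha>"
        using NK s a unfolding K by (intro powr_mono2) auto
    qed (use q in simp)
    finally show ?thesis .
  qed
  then show "(\<Sum>k\<in>{k::nat. 2 powr r * s \<le> 1/2^k}. (s*2^k) powr \<alpha>) \<le> (2 powr (-r)) powr \<alpha> / (1 - 2 powr (-\<alpha>))"
    unfolding K_def R_def .
qed

lemma term_bound:
  fixes s \<alpha> :: real and r :: int and k :: nat
  assumes s: "s > 0" and a: "0 < \<alpha>" "\<alpha> \<le> 1" and r: "0 \<le> r" and k: "2 powr r * s \<le> 1/2^k"
  shows "(2^(k+1)+1) * (s + 2 * (s powr \<alpha> * (1/2^k) powr (1-\<alpha>))) \<le> 9 * (s*2^k) powr \<alpha>"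
proof -
  define x where "x = s * 2^k"
  have x0: "0 < x" unfolding x_def using s by simp
  have "x \<le> 2 powr (- real_of_int r)" unfolding x_def using k K_cond[of "real_of_int r" s k] by blast
  also have "2 powr (- real_of_int r) \<le> 2 powr 0" by (rule powr_mono) (use r in auto)
  also have "(2::real) powr 0 = 1" by simp
  finally have x1: "x \<le> 1" .
  have p: "(0::real) < 2^k" by simp
  have e: "(s powr \<alpha> * (1/2^k) powr (1-\<alpha>)) * 2^k = x powr \<alpha>"
  proof -
    have "(1/2^k) powr (1-\<alpha>) = (1/2^k) powr 1 / (1/2^k) powr \<alpha>"
      by (rule powr_diff)
    also have "\<dots> = (1/2^k) / (1 / (2^k) powr \<alpha>)"
      using p by (simp add: powr_divide)
    also have "\<dots> = (2^k) powr \<alpha> / 2^k"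
      by simp
    finally have "(1/2^k) powr (1-\<alpha>) * 2^k = (2^k) powr \<alpha>" using p by simp
    then have "(s powr \<alpha> * (1/2^k) powr (1-\<alpha>)) * 2^k = s powr \<alpha> * (2^k) powr \<alpha>"
      by (simp add: mult.assoc)
    also have "\<dots> = x powr \<alpha>" unfolding x_def using s by (simp add: powr_mult)
    finally show ?thesis .
  qed
  have xx: "x \<le> x powr \<alpha>"
    using powr_mono'[of \<alpha> 1 x] a x0 x1 by simp
  have xa0: "0 \<le> x powr \<alpha>" by simp
  have eps0: "0 \<le> s powr \<alpha> * (1/2^k) powr (1-\<alpha>)" by simp
  have "(2^(k+1)+1) * (s + 2 * (s powr \<alpha> * (1/2^k) powr (1-\<alpha>)))
      \<le> (3 * 2^k) * (s + 2 * (s powr \<alpha> * (1/2^k) powr (1-\<alpha>)))"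
    by (rule mult_right_mono) (use s eps0 in auto)
  also have "\<dots> = 3 * (x + 2 * ((s powr \<alpha> * (1/2^k) powr (1-\<alpha>)) * 2^k))"
    unfolding x_def by (simp add: algebra_simps)
  also have "\<dots> = 3 * (x + 2 * x powr \<alpha>)" unfolding e ..
  also have "\<dots> \<le> 9 * x powr \<alpha>" using xx by simp
  finally show ?thesis unfolding x_def .
qed

lemma bad_measure:
  fixes a c :: "real^'n"
  assumes s: "s > 0" and a: "0 < \<alpha>" "\<alpha> \<le> 1" and r: "0 \<le> r"
  shows "{\<omega>\<in>Omega. bad r \<alpha> (dyadic c \<omega>) a s} \<in> sets lebesgue"
    and "measure lebesgue {\<omega>\<in>Omega. bad r \<alpha> (dyadic c \<omega>) a s}
           \<le> real CARD('n) * (1/20)^(CARD('n)-1) * 9 * ((2 powr (- real_of_int r)) powr \<alpha> / (1 - 2 powr (-\<alpha>)))"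
proof -
  have "open {\<omega>. bad r \<alpha> (dyadic c \<omega>) a s}" by (rule bad_open[OF s])
  then have "{\<omega>. bad r \<alpha> (dyadic c \<omega>) a s} \<in> sets lebesgue"
    unfolding sets_lborel[symmetric] by (intro sets_completionI_sets) (simp add: borel_open)
  then have "Omega \<inter> {\<omega>. bad r \<alpha> (dyadic c \<omega>) a s} \<in> sets lebesgue"
    using Omega_sets by (rule sets.Int[rotated])
  moreover have eqB: "{\<omega>\<in>Omega. bad r \<alpha> (dyadic c \<omega>) a s} = Omega \<inter> {\<omega>. bad r \<alpha> (dyadic c \<omega>) a s}"
    by blast
  ultimately show setsB: "{\<omega>\<in>Omega. bad r \<alpha> (dyadic c \<omega>) a s} \<in> sets lebesgue" by simp
  define K where "K = {k::nat. 2 powr real_of_int r * s \<le> 1/2^k}"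
  define \<epsilon> where "\<epsilon> = (\<lambda>k::nat. s powr \<alpha> * (1/2^k) powr (1-\<alpha>))"
  define G where "G = (\<lambda>(k::nat) (i::'n) (n::nat). Omega \<inter> {\<omega>::real^'n.
      a$i - c$i - real n/2^(k+1) - \<epsilon> k < \<omega>$i \<and> \<omega>$i < a$i + s - c$i - real n/2^(k+1) + \<epsilon> k})"
  define q' :: real where "q' = (1/20)^(CARD('n)-1)"
  have finK: "finite K" unfolding K_def using geom_K(1)[OF s a(1)] .
  have Gsets: "G k i n \<in> sets lebesgue" for k i n unfolding G_def by (rule strip_sets)
  have Gm: "measure lebesgue (G k i n) \<le> (s + 2 * \<epsilon> k) * q'" for k i n
  proof -
    have "0 \<le> \<epsilon> k" unfolding \<epsilon>_def by simp
    then have le: "a$i - c$i - real n/2^(k+1) - \<epsilon> k \<le> a$i + s - c$i - real n/2^(k+1) + \<epsilon> k"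
      using s by simp
    show ?thesis unfolding G_def q'_def using strip_measure[OF le, of i] by simp
  qed
  define U where "U = (\<Union>k\<in>K. \<Union>i\<in>(UNIV::'n set). \<Union>n\<in>{..(2::nat)^(k+1)}. G k i n)"
  have sub: "{\<omega>\<in>Omega. bad r \<alpha> (dyadic c \<omega>) a s} \<subseteq> U"
  proof
    fix \<omega> assume "\<omega> \<in> {\<omega>\<in>Omega. bad r \<alpha> (dyadic c \<omega>) a s}"
    then have O: "\<omega> \<in> Omega" and b: "bad r \<alpha> (dyadic c \<omega>) a s" by auto
    from bad_cover[OF s b] obtain k i n where k: "2 powr real_of_int r * s \<le> 1/2^k"
      and n: "n \<le> 2^(k+1)"
      and w: "a$i - c$i - real n/2^(k+1) - s powr \<alpha> * (1/2^k) powr (1-\<alpha>) < \<omega>$i \<and>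
     \<omega>$i < a$i + s - c$i - real n/2^(k+1) + s powr \<alpha> * (1/2^k) powr (1-\<alpha>)"
      by blast
    have "\<omega> \<in> G k i n" unfolding G_def \<epsilon>_def using O w by simp
    moreover have "k \<in> K" unfolding K_def using k by simp
    ultimately show "\<omega> \<in> U" unfolding U_def using n by blast
  qed
  have Usets: "U \<in> sets lebesgue" unfolding U_def
    using finK Gsets by (intro sets.finite_UN) auto
  have UO: "U \<subseteq> Omega" unfolding U_def G_def by auto
  have Ufm: "U \<in> lmeasurable" by (rule fmeasurableI2[OF Omega_lmeas UO Usets])
  have "measure lebesgue {\<omega>\<in>Omega. bad r \<alpha> (dyadic c \<omega>) a s} \<le> measure lebesgue U"
    by (rule measure_mono_fmeasurable[OF sub setsB Ufm])
  also have "\<dots> \<le> (\<Sum>k\<in>K. measure lebesgue (\<Union>i\<in>(UNIV::'n set). \<Union>n\<in>{..(2::nat)^(k+1)}. G k i n))"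
    unfolding U_def by (rule measure_UNION_le[OF finK]) (use Gsets in auto)
  also have "\<dots> \<le> (\<Sum>k\<in>K. real CARD('n) * q' * 9 * (s*2^k) powr \<alpha>)"
  proof (rule sum_mono)
    fix k assume kK: "k \<in> K"
    have "measure lebesgue (\<Union>i\<in>(UNIV::'n set). \<Union>n\<in>{..(2::nat)^(k+1)}. G k i n)
        \<le> (\<Sum>i\<in>(UNIV::'n set). measure lebesgue (\<Union>n\<in>{..(2::nat)^(k+1)}. G k i n))"
      by (rule measure_UNION_le) (use Gsets in auto)
    also have "\<dots> \<le> (\<Sum>i\<in>(UNIV::'n set). \<Sum>n\<in>{..(2::nat)^(k+1)}. measure lebesgue (G k i n))"
      by (rule sum_mono, rule measure_UNION_le) (use Gsets in auto)
    also have "\<dots> \<le> (\<Sum>i\<in>(UNIV::'n set). \<Sum>n\<in>{..(2::nat)^(k+1)}. (s + 2 * \<epsilon> k) * q')"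
      by (intro sum_mono Gm)
    also have "\<dots> = real CARD('n) * q' * ((2^(k+1)+1) * (s + 2 * \<epsilon> k))"
      by simp
    also have "\<dots> \<le> real CARD('n) * q' * (9 * (s*2^k) powr \<alpha>)"
    proof (rule mult_left_mono)
      show "(2^(k+1)+1) * (s + 2 * \<epsilon> k) \<le> 9 * (s*2^k) powr \<alpha>"
        unfolding \<epsilon>_def using term_bound[OF s a r] kK unfolding K_def by simp
      show "0 \<le> real CARD('n) * q'" unfolding q'_def by simp
    qed
    finally show "measure lebesgue (\<Union>i\<in>(UNIV::'n set). \<Union>n\<in>{..(2::nat)^(k+1)}. G k i n)
        \<le> real CARD('n) * q' * 9 * (s*2^k) powr \<alpha>" by (simp add: mult.assoc)
  qed
  also have "\<dots> = real CARD('n) * q' * 9 * (\<Sum>k\<in>K. (s*2^k) powr \<alpha>)"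
    by (simp add: sum_distrib_left)
  also have "\<dots> \<le> real CARD('n) * q' * 9 * ((2 powr (- real_of_int r)) powr \<alpha> / (1 - 2 powr (-\<alpha>)))"
    by (rule mult_left_mono) (use geom_K(2)[OF s a(1), of "real_of_int r"] in \<open>simp_all add: K_def q'_def\<close>)
  finally show "measure lebesgue {\<omega>\<in>Omega. bad r \<alpha> (dyadic c \<omega>) a s}
           \<le> real CARD('n) * (1/20)^(CARD('n)-1) * 9 * ((2 powr (- real_of_int r)) powr \<alpha> / (1 - 2 powr (-\<alpha>)))"
    unfolding q'_def .
qed



lemma key_bound:
  fixes c a :: "real^'n"
  assumes a: "0 < \<alpha>" "\<alpha> \<le> 1" and s: "s > 0"
  and M: "M = real CARD('n) * (1/20)^(CARD('n)-1) * 9 / (1 - 2 powr (-\<alpha>)) / (1/40)^CARD('n)"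
  and d: "0 < \<delta>" "\<delta> < min 1 (1/M)"
  and rr: "2 powr (- real_of_int r) \<le> \<delta> powr (3/\<alpha>)"
  shows "{\<omega>\<in>Omega. bad r \<alpha> (dyadic c \<omega>) a s} \<in> sets lebesgue \<and>
         measure lebesgue {\<omega>\<in>Omega. bad r \<alpha> (dyadic c \<omega>) a s}
           / measure lebesgue (Omega :: (real^'n) set) \<le> \<delta>^2"
proof -
  define C0 where "C0 = real CARD('n) * (1/20)^(CARD('n)-1) * 9 / (1 - 2 powr (-\<alpha>))"
  have q: "0 < 1 - 2 powr (-\<alpha>)" using a by (auto simp: powr_minus_divide)
  have C0: "0 < C0" unfolding C0_def using q by simp
  have MC: "M = C0 / (1/40)^CARD('n)" unfolding M C0_def ..
  have M0: "0 < M" unfolding MC using C0 by simp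
  have d1: "\<delta> < 1" and dM: "\<delta> * M < 1" using d M0 by (auto simp: less_divide_eq)
  have S0: "0 < 3/\<alpha>" using a by simp
  have "\<delta> powr (3/\<alpha>) < 1 powr (3/\<alpha>)"
    by (rule powr_less_mono2) (use S0 d d1 in auto)
  then have h: "2 powr (- real_of_int r) < 2 powr 0" using rr by simp
  have "- real_of_int r < 0" using powr_less_cancel_iff[of 2 "- real_of_int r" 0] h by simp
  then have r: "0 \<le> r" by simp
  have X: "(2 powr (- real_of_int r)) powr \<alpha> \<le> \<delta>^3"
  proof -
    have e3: "3/\<alpha> * \<alpha> = 3" using a by simp
    have "(2 powr (- real_of_int r)) powr \<alpha> \<le> (\<delta> powr (3/\<alpha>)) powr \<alpha>"
      by (rule powr_mono2[OF _ _ rr]) (use a in simp_all)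
    also have "\<dots> = \<delta> powr (3/\<alpha> * \<alpha>)" by (rule powr_powr)
    also have "\<dots> = \<delta> powr 3" unfolding e3 ..
    also have "\<dots> = \<delta>^3" using powr_realpow[of \<delta> 3] d by simp
    finally show ?thesis .
  qed
  note bm = bad_measure[OF s a r, of c a]
  have mb: "measure lebesgue {\<omega>\<in>Omega. bad r \<alpha> (dyadic c \<omega>) a s} \<le> C0 * (2 powr (- real_of_int r)) powr \<alpha>"
    using bm(2) unfolding C0_def by (simp add: field_simps)
  have O: "(1/40)^CARD('n) \<le> measure lebesgue (Omega :: (real^'n) set)" by (rule Omega_measure)
  have "measure lebesgue {\<omega>\<in>Omega. bad r \<alpha> (dyadic c \<omega>) a s} / measure lebesgue (Omega :: (real^'n) set)
      \<le> measure lebesgue {\<omega>\<in>Omega. bad r \<alpha> (dyadic c \<omega>) a s} / (1/40)^CARD('n)"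
  proof (rule divide_left_mono[OF O])
    have p40: "0 < (1/40::real)^CARD('n)" by simp
    then have mO: "0 < measure lebesgue (Omega :: (real^'n) set)" using O by linarith
    show "0 < measure lebesgue (Omega :: (real^'n) set) * (1 / 40) ^ CARD('n)"
      using mO p40 by (rule mult_pos_pos)
  qed simp
  also have "\<dots> \<le> C0 * (2 powr (- real_of_int r)) powr \<alpha> / (1/40)^CARD('n)"
    by (rule divide_right_mono[OF mb]) simp
  also have "\<dots> = M * (2 powr (- real_of_int r)) powr \<alpha>" unfolding MC by simp
  also have "\<dots> \<le> M * \<delta>^3" by (rule mult_left_mono[OF X]) (use M0 in simp)
  also have "\<dots> = (\<delta> * M) * \<delta>^2" by (simp add: power3_eq_cube power2_eq_square)
  also have "\<dots> \<le> 1 * \<delta>^2" by (rule mult_right_mono) (use dM in auto)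
  finally show ?thesis using bm(1) by simp
qed

theorem theorem15:
  fixes c :: "real^'n" and \<tau> m :: real
  assumes "0 < \<tau>" "\<tau> \<le> 1" "0 < m"
  defines "\<alpha> \<equiv> \<tau> / (2 * \<tau> + 2 * m)"
  shows "\<exists>S \<ge> 2. \<exists>\<delta>0 > 0. \<forall>\<delta>. 0 < \<delta> \<and> \<delta> < \<delta>0 \<longrightarrow>
    (\<forall>r::int. 2 powr (- real_of_int r) \<le> \<delta> powr S \<and> \<delta> powr S < 2 powr (- real_of_int r + 1) \<longrightarrow>
      (\<forall>\<omega>1 \<in> Omega. \<forall>(a,s) \<in> dyadic c \<omega>1.
         {\<omega>2 \<in> Omega. bad r \<alpha> (dyadic c \<omega>2) a s} \<in> sets lebesgue \<and>
         measure lebesgue {\<omega>2 \<in> Omega. bad r \<alpha> (dyadic c \<omega>2) a s}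
           / measure lebesgue (Omega :: (real^'n) set) \<le> \<delta>^2) \<and>
      (\<forall>\<omega>2 \<in> Omega. \<forall>(b,t) \<in> dyadic c \<omega>2.
         {\<omega>1 \<in> Omega. bad r \<alpha> (dyadic c \<omega>1) b t} \<in> sets lebesgue \<and>
         measure lebesgue {\<omega>1 \<in> Omega. bad r \<alpha> (dyadic c \<omega>1) b t}
           / measure lebesgue (Omega :: (real^'n) set) \<le> \<delta>^2))"
proof -
  have a0: "0 < \<alpha>" unfolding \<alpha>_def using assms by simp
  have a2: "\<alpha> \<le> 1/2" unfolding \<alpha>_def using assms by (simp add: divide_le_eq)
  then have a1: "\<alpha> \<le> 1" by simp
  define M where "M = real CARD('n) * (1/20)^(CARD('n)-1) * 9 / (1 - 2 powr (-\<alpha>)) / (1/40)^CARD('n)"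
  have q: "0 < 1 - 2 powr (-\<alpha>)" using a0 by (auto simp: powr_minus_divide)
  have M0: "0 < M" unfolding M_def using q by simp
  have S2: "2 \<le> 3/\<alpha>" using a0 a2 by (simp add: le_divide_eq)
  have d0: "0 < min 1 (1/M)" using M0 by simp
  have spos: "s > 0" if "(a, s) \<in> dyadic c w" for a s and w :: "real^'n"
    using that unfolding dyadic_def by auto
  show ?thesis
  proof (rule exI[of _ "3/\<alpha>"], rule conjI[OF S2], rule exI[of _ "min 1 (1/M)"], rule conjI[OF d0], intro allI impI)
    fix \<delta> r assume d: "0 < \<delta> \<and> \<delta> < min 1 (1/M)"
      and rr: "2 powr (- real_of_int r) \<le> \<delta> powr (3/\<alpha>) \<and> \<delta> powr (3/\<alpha>) < 2 powr (- real_of_int r + 1)"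
    have one: "\<forall>\<omega>1 \<in> Omega. \<forall>(a,s) \<in> dyadic c \<omega>1.
         {\<omega>2 \<in> Omega. bad r \<alpha> (dyadic c \<omega>2) a s} \<in> sets lebesgue \<and>
         measure lebesgue {\<omega>2 \<in> Omega. bad r \<alpha> (dyadic c \<omega>2) a s}
           / measure lebesgue (Omega :: (real^'n) set) \<le> \<delta>^2"
    proof (intro ballI)
      fix w :: "real^'n" and p assume "w \<in> Omega" "p \<in> dyadic c w"
      then obtain a s where p: "p = (a, s)" and as: "(a, s) \<in> dyadic c w" by (cases p) auto
      have "s > 0" using spos[OF as] .
      then have K: "{\<omega>\<in>Omega. bad r \<alpha> (dyadic c \<omega>) a s} \<in> sets lebesgue \<and>
         measure lebesgue {\<omega>\<in>Omega. bad r \<alpha> (dyadic c \<omega>) a s}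
           / measure lebesgue (Omega :: (real^'n) set) \<le> \<delta>^2"
        using key_bound[OF a0 a1 _ M_def, of s \<delta> r c a] d rr by blast
      show "case p of (a, s) \<Rightarrow> {\<omega>2 \<in> Omega. bad r \<alpha> (dyadic c \<omega>2) a s} \<in> sets lebesgue \<and>
         measure lebesgue {\<omega>2 \<in> Omega. bad r \<alpha> (dyadic c \<omega>2) a s}
           / measure lebesgue (Omega :: (real^'n) set) \<le> \<delta>^2"
        unfolding p prod.case using K .
    qed
    show "(\<forall>\<omega>1 \<in> Omega. \<forall>(a,s) \<in> dyadic c \<omega>1.
         {\<omega>2 \<in> Omega. bad r \<alpha> (dyadic c \<omega>2) a s} \<in> sets lebesgue \<and>
         measure lebesgue {\<omega>2 \<in> Omega. bad r \<alpha> (dyadic c \<omega>2) a s}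
           / measure lebesgue (Omega :: (real^'n) set) \<le> \<delta>^2) \<and>
      (\<forall>\<omega>2 \<in> Omega. \<forall>(b,t) \<in> dyadic c \<omega>2.
         {\<omega>1 \<in> Omega. bad r \<alpha> (dyadic c \<omega>1) b t} \<in> sets lebesgue \<and>
         measure lebesgue {\<omega>1 \<in> Omega. bad r \<alpha> (dyadic c \<omega>1) b t}
           / measure lebesgue (Omega :: (real^'n) set) \<le> \<delta>^2)"
      using one one by (rule conjI)
  qed
qed

end
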